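(* Fix $b>0$ and consider, for $\varepsilon\in(-b,\infty)$, the functions $\alpha(\varepsilon),\beta(\varepsilon),\gamma(\varepsilon)$ defined in the context. Then: $\alpha$ and $\beta$ are strictly decreasing in $\varepsilon$; $\gamma$, $\gamma-\alpha-2\beta$, $\gamma-\alpha+2\beta$ and $\gamma-\alpha$ are strictly increasing in $\varepsilon$; $\alpha+\gamma$ has a unique minimum at $\varepsilon=0$. Moreover $\alpha(0)=\gamma(0)=1$ and $\beta(0)=0$ for every $b>0$.
   Context: With $t=(b+\varepsilon)/b$: $\alpha=-t^2+2t-\frac4t+\frac4{t^2}$, $\beta=-t^3+t^2+t-3+\frac2t$, $\gamma=t^4-t^2+2t-1$. (These are the entries of the matrix $P(b,\varepsilon,0)=\begin{pmatrix}\alpha&\beta\\-\beta&\gamma\end{pmatrix}$, where $P(b,\varepsilon,k)$ is a transfer matrix of the tight-binding model.) *)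

theory Defs
  imports Complex_Main
begin

definition tpar :: "real \<Rightarrow> real \<Rightarrow> real" where
  "tpar b \<epsilon> = (b + \<epsilon>) / b"

definition alpha :: "real \<Rightarrow> real \<Rightarrow> real" where
  "alpha b \<epsilon> = (let t = tpar b \<epsilon> in -(t^2) + 2*t - 4/t + 4/t^2)"

definition beta :: "real \<Rightarrow> real \<Rightarrow> real" where
  "beta b \<epsilon> = (let t = tpar b \<epsilon> in -(t^3) + t^2 + t - 3 + 2/t)"

definition gamma :: "real \<Rightarrow> real \<Rightarrow> real" where
  "gamma b \<epsilon> = (let t = tpar b \<epsilon> in t^4 -(t^2) + 2*t - 1)"

end

theory Submission
  imports Defs
begin

lemma p1: assumes x: "x > 0" shows "-2*x^4+2*x^3+4*x-8 < (0::real)"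
proof (cases "x \<le> 1")
  case True
  have "x^3 \<le> 1" using True x by (simp add: power_le_one)
  moreover have "x^4 \<ge> 0" by simp
  ultimately show ?thesis using True by linarith
next
  case False
  have e: "x^4 - x^3 = x^3*(x-1)" by algebra
  show ?thesis
  proof (cases "x \<le> 2")
    case True
    have "x^3*(x-1) > 0" using False by simp
    then show ?thesis using e True False by linarith
  next
    case F2: False
    have "x^3 \<ge> 2^3" using F2 by (intro power_mono) auto
    then have "x^3*(x-1) \<ge> 8*(x-1)" using False by (intro mult_right_mono) auto
    then have "x^4 - x^3 \<ge> 8*(x-1)" using e by simp
    then show ?thesis using F2 by (smt (verit))
  qed
qed
lemma p2: assumes x: "x > 0" shows "-3*x^4+2*x^3+x^2-2 < (0::real)"
proof -
  have "x^4 - 2*x^3 + x^2 = x^2*(x-1)^2" by algebra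
  moreover have "x^2*(x-1)^2 \<ge> 0" by simp
  moreover have "x^4 - x^2 + 1/4 = (x^2-1/2)^2" by algebra
  moreover have "(x^2-1/2)^2 \<ge> 0" by simp
  ultimately show ?thesis by linarith
qed
lemma p3: assumes x: "x > 0" shows "4*x^3-2*x+2 > (0::real)"
proof (cases "x \<le> 1")
  case True
  have "x^3 > 0" using x by simp
  then show ?thesis using True by linarith
next
  case False
  have "x^3 \<ge> x^1" using False by (intro power_increasing) auto
  then show ?thesis using False by simp
qed
lemma p4: assumes x: "x > 0" shows "4*x^6+6*x^5-4*x^4-2*x^3+8 > (0::real)"
proof (cases "x \<le> 1")
  case True
  have "x^3 \<le> 1" "x^4 \<le> 1" using True x by (simp_all add: power_le_one)
  moreover have "x^6 \<ge> 0" "x^5 \<ge> 0" using x by simp_all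
  ultimately show ?thesis by linarith
next
  case False
  have "x^6 \<ge> x^4" "x^5 \<ge> x^3" using False by (intro power_increasing; simp)+
  moreover have "x^5 \<ge> 0" using x by simp
  ultimately show ?thesis by linarith
qed
lemma p5: assumes x: "x > 0" shows "4*x^6-6*x^5+4*x^4+2*x^3-8*x+8 > (0::real)"
proof -
  have e1: "4*x^6-6*x^5+4*x^4 - 7/4*x^4 = x^4*(2*x-3/2)^2" by algebra
  have "x^4*(2*x-3/2)^2 \<ge> 0" by simp
  have e2: "x^3-3*x+2 = (x-1)^2*(x+2)" by algebra
  have "(x-1)^2*(x+2) \<ge> 0" using x by simp
  have "x^4 > 0" using x by simp
  show ?thesis
  proof (cases "x \<le> 2")
    case True
    then show ?thesis using e1 e2 \<open>x^4*(2*x-3/2)^2 \<ge> 0\<close> \<open>(x-1)^2*(x+2) \<ge> 0\<close> \<open>x^4 > 0\<close> by linarith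
  next
    case False
    have "x^2 \<ge> 2^2" using False by (intro power_mono) auto
    then have "x^2 * x \<ge> 4 * x" using x by (intro mult_right_mono) auto
    then have "x^3 \<ge> 4*x" by (simp add: power3_eq_cube power2_eq_square)
    then show ?thesis using e1 \<open>x^4*(2*x-3/2)^2 \<ge> 0\<close> \<open>x^4 > 0\<close> by linarith
  qed
qed
lemma p6: assumes x: "x > 0" shows "4*x^6-4*x+8 > (0::real)"
proof (cases "x \<le> 1")
  case True
  have "x^6 \<ge> 0" by simp
  then show ?thesis using True by linarith
next
  case False
  have "x^6 \<ge> x^1" using False by (intro power_increasing) auto
  then show ?thesis by simp
qed
lemma p7: assumes x: "x > 0" shows "x^4+2*x^3+x^2+4*x+4 > (0::real)"
  using x by (simp add: add_pos_nonneg add_pos_pos)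

lemma mono_rat:
  fixes F F' P :: "real \<Rightarrow> real"
  assumes d: "\<And>x. x > 0 \<Longrightarrow> (F has_real_derivative F' x) (at x)"
      and e: "\<And>x. x > 0 \<Longrightarrow> F' x = P x / x^k"
      and p: "\<And>x. x > 0 \<Longrightarrow> P x > 0"
      and b: "b > 0"
  shows "strict_mono_on {-b<..} (\<lambda>e. F (tpar b e))"
proof (rule strict_mono_onI)
  fix r s :: real assume "r \<in> {-b<..}" "s \<in> {-b<..}" "r < s"
  then have rs: "tpar b r > 0" "tpar b s > 0" "tpar b r < tpar b s"
    using b by (auto simp: tpar_def divide_strict_right_mono)
  have "\<forall>x. tpar b r \<le> x \<and> x \<le> tpar b s \<longrightarrow> (\<exists>y. (F has_real_derivative y) (at x) \<and> 0 < y)"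
  proof (intro allI impI)
    fix x assume "tpar b r \<le> x \<and> x \<le> tpar b s"
    then have x: "x > 0" using rs by linarith
    show "\<exists>y. (F has_real_derivative y) (at x) \<and> 0 < y"
      using d[OF x] e[OF x] p[OF x] x by auto
  qed
  then show "F (tpar b r) < F (tpar b s)"
    using rs by (intro DERIV_pos_imp_increasing[of "tpar b r" "tpar b s" F]) auto
qed

lemma anti_of_neg:
  assumes "strict_mono_on A (\<lambda>e. - f e)"
  shows "strict_antimono_on A (f :: real \<Rightarrow> real)"
  using assms unfolding monotone_on_def by force

lemma tpar0: "b > 0 \<Longrightarrow> tpar b 0 = 1"
  by (simp add: tpar_def)

theorem lemma7:
  fixes b :: real
  assumes "b > 0"
  shows "strict_antimono_on {-b<..} (alpha b)
    \<and> strict_antimono_on {-b<..} (beta b)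
    \<and> strict_mono_on {-b<..} (gamma b)
    \<and> strict_mono_on {-b<..} (\<lambda>\<epsilon>. gamma b \<epsilon> - alpha b \<epsilon> - 2 * beta b \<epsilon>)
    \<and> strict_mono_on {-b<..} (\<lambda>\<epsilon>. gamma b \<epsilon> - alpha b \<epsilon> + 2 * beta b \<epsilon>)
    \<and> strict_mono_on {-b<..} (\<lambda>\<epsilon>. gamma b \<epsilon> - alpha b \<epsilon>)
    \<and> (\<forall>\<epsilon>\<in>{-b<..}. \<epsilon> \<noteq> 0 \<longrightarrow> alpha b 0 + gamma b 0 < alpha b \<epsilon> + gamma b \<epsilon>)
    \<and> alpha b 0 = 1 \<and> gamma b 0 = 1 \<and> beta b 0 = 0"
proof (intro conjI)
  note b = assms
  have A: "strict_mono_on {-b<..} (\<lambda>e. (\<lambda>t::real. -(-(t^2) + 2*t - 4/t + 4/t^2)) (tpar b e))"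
  proof (rule mono_rat[where k=3 and P="\<lambda>x. -(-2*x^4+2*x^3+4*x-8)"])
    fix x :: real assume x: "x > 0"
    show "((\<lambda>t::real. -(-(t^2) + 2*t - 4/t + 4/t^2)) has_real_derivative
       -(-2*x+2+4/x^2-8/x^3)) (at x)"
      using x by (auto intro!: derivative_eq_intros simp: field_simps power2_eq_square power3_eq_cube)
    show "-(-2*x+2+4/x^2-8/x^3) = -(-2*x^4+2*x^3+4*x-8) / x^3"
      using x by (simp add: field_simps eval_nat_numeral)
    show "-(-2*x^4+2*x^3+4*x-8) > 0" using p1[OF x] by simp
  qed (rule b)
  then show "strict_antimono_on {-b<..} (alpha b)"
    by (intro anti_of_neg) (simp add: alpha_def Let_def)
  have B: "strict_mono_on {-b<..} (\<lambda>e. (\<lambda>t::real. -(-(t^3) + t^2 + t - 3 + 2/t)) (tpar b e))"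
  proof (rule mono_rat[where k=2 and P="\<lambda>x. -(-3*x^4+2*x^3+x^2-2)"])
    fix x :: real assume x: "x > 0"
    show "((\<lambda>t::real. -(-(t^3) + t^2 + t - 3 + 2/t)) has_real_derivative
       -(-3*x^2+2*x+1-2/x^2)) (at x)"
      using x by (auto intro!: derivative_eq_intros simp: field_simps power2_eq_square power3_eq_cube)
    show "-(-3*x^2+2*x+1-2/x^2) = -(-3*x^4+2*x^3+x^2-2) / x^2"
      using x by (simp add: field_simps eval_nat_numeral)
    show "-(-3*x^4+2*x^3+x^2-2) > 0" using p2[OF x] by simp
  qed (rule b)
  then show "strict_antimono_on {-b<..} (beta b)"
    by (intro anti_of_neg) (simp add: beta_def Let_def)
  have G: "strict_mono_on {-b<..} (\<lambda>e. (\<lambda>t::real. t^4 -(t^2) + 2*t - 1) (tpar b e))"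
  proof (rule mono_rat[where k=0 and P="\<lambda>x. 4*x^3-2*x+2"])
    fix x :: real assume x: "x > 0"
    show "((\<lambda>t::real. t^4 -(t^2) + 2*t - 1) has_real_derivative (4*x^3-2*x+2)) (at x)"
      using x by (auto intro!: derivative_eq_intros simp: field_simps power2_eq_square power3_eq_cube)
    show "4*x^3-2*x+2 = (4*x^3-2*x+2) / x^0" by simp
    show "4*x^3-2*x+2 > 0" using p3[OF x] by simp
  qed (rule b)
  then show "strict_mono_on {-b<..} (gamma b)"
    unfolding gamma_def[abs_def] Let_def by simp
  have C1: "strict_mono_on {-b<..} (\<lambda>e. (\<lambda>t::real. t^4+2*t^3-2*t^2-2*t+5-4/t^2) (tpar b e))"
  proof (rule mono_rat[where k=3 and P="\<lambda>x. 4*x^6+6*x^5-4*x^4-2*x^3+8"])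
    fix x :: real assume x: "x > 0"
    show "((\<lambda>t::real. t^4+2*t^3-2*t^2-2*t+5-4/t^2) has_real_derivative (4*x^3+6*x^2-4*x-2+8/x^3)) (at x)"
      using x by (auto intro!: derivative_eq_intros simp: field_simps power2_eq_square power3_eq_cube)
    show "4*x^3+6*x^2-4*x-2+8/x^3 = (4*x^6+6*x^5-4*x^4-2*x^3+8) / x^3"
      using x by (simp add: field_simps eval_nat_numeral)
    show "4*x^6+6*x^5-4*x^4-2*x^3+8 > 0" using p4[OF x] by simp
  qed (rule b)
  then show "strict_mono_on {-b<..} (\<lambda>\<epsilon>. gamma b \<epsilon> - alpha b \<epsilon> - 2 * beta b \<epsilon>)"
    using b by (simp add: gamma_def alpha_def beta_def Let_def algebra_simps)
  have C2: "strict_mono_on {-b<..} (\<lambda>e. (\<lambda>t::real. t^4-2*t^3+2*t^2+2*t-7+8/t-4/t^2) (tpar b e))"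
  proof (rule mono_rat[where k=3 and P="\<lambda>x. 4*x^6-6*x^5+4*x^4+2*x^3-8*x+8"])
    fix x :: real assume x: "x > 0"
    show "((\<lambda>t::real. t^4-2*t^3+2*t^2+2*t-7+8/t-4/t^2) has_real_derivative (4*x^3-6*x^2+4*x+2-8/x^2+8/x^3)) (at x)"
      using x by (auto intro!: derivative_eq_intros simp: field_simps power2_eq_square power3_eq_cube)
    show "4*x^3-6*x^2+4*x+2-8/x^2+8/x^3 = (4*x^6-6*x^5+4*x^4+2*x^3-8*x+8) / x^3"
      using x by (simp add: field_simps eval_nat_numeral)
    show "4*x^6-6*x^5+4*x^4+2*x^3-8*x+8 > 0" using p5[OF x] by simp
  qed (rule b)
  then show "strict_mono_on {-b<..} (\<lambda>\<epsilon>. gamma b \<epsilon> - alpha b \<epsilon> + 2 * beta b \<epsilon>)"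
    using b by (simp add: gamma_def alpha_def beta_def Let_def algebra_simps)
  have C3: "strict_mono_on {-b<..} (\<lambda>e. (\<lambda>t::real. t^4-1+4/t-4/t^2) (tpar b e))"
  proof (rule mono_rat[where k=3 and P="\<lambda>x. 4*x^6-4*x+8"])
    fix x :: real assume x: "x > 0"
    show "((\<lambda>t::real. t^4-1+4/t-4/t^2) has_real_derivative (4*x^3-4/x^2+8/x^3)) (at x)"
      using x by (auto intro!: derivative_eq_intros simp: field_simps power2_eq_square power3_eq_cube)
    show "4*x^3-4/x^2+8/x^3 = (4*x^6-4*x+8) / x^3"
      using x by (simp add: field_simps eval_nat_numeral)
    show "4*x^6-4*x+8 > 0" using p6[OF x] by simp
  qed (rule b)
  then show "strict_mono_on {-b<..} (\<lambda>\<epsilon>. gamma b \<epsilon> - alpha b \<epsilon>)"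
    using b by (simp add: gamma_def alpha_def beta_def Let_def algebra_simps)
  show "\<forall>\<epsilon>\<in>{-b<..}. \<epsilon> \<noteq> 0 \<longrightarrow> alpha b 0 + gamma b 0 < alpha b \<epsilon> + gamma b \<epsilon>"
  proof (intro ballI impI)
    fix e assume e: "e \<in> {-b<..}" "e \<noteq> 0"
    define t where "t = tpar b e"
    have t: "t > 0" "t \<noteq> 1" using e b by (auto simp: t_def tpar_def)
    have "alpha b e + gamma b e - 2 = (t-1)^2 * (t^4+2*t^3+t^2+4*t+4) / t^2"
      using t by (simp add: alpha_def gamma_def Let_def t_def[symmetric] field_simps power2_eq_square power3_eq_cube power4_eq_xxxx)
    moreover have "(t-1)^2 * (t^4+2*t^3+t^2+4*t+4) / t^2 > 0"
      using t p7[OF t(1)] by simp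
    moreover have "alpha b 0 + gamma b 0 = 2" using b by (simp add: alpha_def gamma_def tpar0)
    ultimately show "alpha b 0 + gamma b 0 < alpha b e + gamma b e" by linarith
  qed
  show "alpha b 0 = 1" using b by (simp add: alpha_def tpar0)
  show "gamma b 0 = 1" using b by (simp add: gamma_def tpar0)
  show "beta b 0 = 0" using b by (simp add: beta_def tpar0)
qed

end
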